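(* Assume $S(w)\neq\emptyset$ for all $w\in\mathbb R^m$ and that $x\mapsto\max_{i}(f_i(x)-w_i)$ satisfies the growth property uniformly along approximating sequences. Let $w^*\in\mathbb R^m$ and $(w^k)_{k\ge0}\subseteq\mathbb R^m$ with $w^k\to w^*$. Then $(S(w^k))_{k\ge0}$ is Mosco convergent to $S(w^* )$.
   Context: $\mathcal H$ is a real Hilbert space; $f_1,\dots,f_m:\mathcal H\to\mathbb R$ are convex and continuously differentiable. For $w\in\mathbb R^m$, $S(w):=\operatorname{argmin}_{z\in\mathcal H}\max_{i=1,\dots,m}(f_i(z)-w_i)$ (a closed convex set). Growth property uniformly along approximating sequences: for every $w^*\in\mathbb R^m$ there is a strictly increasing $\psi:[0,\infty)\to[0,\infty)$ with $\psi(0)=0$ such that for every sequence $(w^k)\subseteq\mathbb R^m$ with $w^k\to w^*$, $\max_i(f_i(x^* )-w^k_i)-\inf_{z\in\mathcal H}\max_i(f_i(z)-w^k_i)\ge\psi(\operatorname{dist}(x^*,S(w^k)))$ for all $x^*\in S(w^* )$ and all $k\ge0$. Mosco convergence: nonempty closed convex sets $C^k$ are Mosco convergent to a nonempty closed convex $C^*$ if (i) for every $x^*\in C^*$ there exist $x^k\in C^k$ with $x^k\to x^*$ strongly, and (ii) whenever $(k_l)$ is a subsequence, $x^{k_l}\in C^{k_l}$ and $x^{k_l}\rightharpoonup x^*$ weakly, then $x^*\in C^*$. *)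

theory Defs
  imports "HOL-Analysis.Analysis"
begin

text \<open>Scalarized objective: x maps to max over i of (f i x - w i). The index set
  {1..m} is modelled by a finite type 'm; w in R^m is a function 'm to real.\<close>
definition scal :: "('m::finite \<Rightarrow> 'a \<Rightarrow> real) \<Rightarrow> ('m \<Rightarrow> real) \<Rightarrow> 'a \<Rightarrow> real" where
  "scal f w x = Max (range (\<lambda>i. f i x - w i))"

definition Sol :: "('m::finite \<Rightarrow> 'a \<Rightarrow> real) \<Rightarrow> ('m \<Rightarrow> real) \<Rightarrow> 'a set" where
  "Sol f w = {x. \<forall>z. scal f w x \<le> scal f w z}"

definition weakly_conv :: "(nat \<Rightarrow> 'a::real_inner) \<Rightarrow> 'a \<Rightarrow> bool" where
  "weakly_conv xs x \<longleftrightarrow> (\<forall>y. (\<lambda>k. inner (xs k) y) \<longlonglongrightarrow> inner x y)"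

definition mosco_conv :: "(nat \<Rightarrow> 'a::real_inner set) \<Rightarrow> 'a set \<Rightarrow> bool" where
  "mosco_conv C Cs \<longleftrightarrow>
     (\<forall>k. C k \<noteq> {} \<and> closed (C k) \<and> convex (C k)) \<and> Cs \<noteq> {} \<and> closed Cs \<and> convex Cs \<and>
     (\<forall>x\<in>Cs. \<exists>xs. (\<forall>k. xs k \<in> C k) \<and> xs \<longlonglongrightarrow> x) \<and>
     (\<forall>r xs x. strict_mono r \<longrightarrow> (\<forall>l. xs l \<in> C (r l)) \<longrightarrow> weakly_conv xs x \<longrightarrow> x \<in> Cs)"

definition uniform_growth :: "('m::finite \<Rightarrow> 'a::real_inner \<Rightarrow> real) \<Rightarrow> bool" where
  "uniform_growth f \<longleftrightarrow> (\<forall>ws::'m \<Rightarrow> real. \<exists>\<psi>::real \<Rightarrow> real.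
      strict_mono_on {0..} \<psi> \<and> \<psi> 0 = 0 \<and> (\<forall>t\<ge>0. \<psi> t \<ge> 0) \<and>
      (\<forall>wk::nat \<Rightarrow> ('m \<Rightarrow> real). wk \<longlonglongrightarrow> ws \<longrightarrow>
         (\<forall>x\<in>Sol f ws. \<forall>k.
            scal f (wk k) x - (INF z. scal f (wk k) z) \<ge> \<psi> (infdist x (Sol f (wk k))))))"

end

theory Submission
  imports Defs
begin

lemma comp_tendsto:
  fixes wk :: "nat \<Rightarrow> 'm::finite \<Rightarrow> real"
  assumes "wk \<longlonglongrightarrow> ws" shows "(\<lambda>k. wk k i) \<longlonglongrightarrow> ws i"
proof -
  have "isCont (\<lambda>k. k i) ws"
    by (metis continuous_on_eq_continuous_at open_UNIV UNIV_I continuous_on_product_coordinates)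
  then show ?thesis using assms by (rule isCont_tendsto_compose[where g="\<lambda>x. x i"])
qed

lemma delta_tendsto:
  fixes wk :: "nat \<Rightarrow> 'm::finite \<Rightarrow> real"
  assumes "wk \<longlonglongrightarrow> ws" shows "(\<lambda>k. \<Sum>i\<in>UNIV. \<bar>wk k i - ws i\<bar>) \<longlonglongrightarrow> 0"
proof -
  have "(\<lambda>k. \<Sum>i\<in>UNIV. \<bar>wk k i - ws i\<bar>) \<longlonglongrightarrow> (\<Sum>i\<in>(UNIV::'m set). \<bar>ws i - ws i\<bar>)"
    by (intro tendsto_sum tendsto_rabs tendsto_diff comp_tendsto[OF assms] tendsto_const)
  then show ?thesis by simp
qed

lemma scal_ge: "f i x - w i \<le> scal f w (x::'a)"
  unfolding scal_def by (rule Max_ge) auto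

lemma scal_attained: "\<exists>i. scal f w x = f i x - w i"
proof -
  have "scal f w x \<in> range (\<lambda>i. f i x - w i)" unfolding scal_def by (rule Max_in) auto
  then show ?thesis by auto
qed

lemma scal_le_iff: "scal f w x \<le> c \<longleftrightarrow> (\<forall>i. f i x - w i \<le> c)"
  unfolding scal_def by (subst Max_le_iff) auto

lemma scal_lip1: "scal f w x \<le> scal f w' x + (\<Sum>i\<in>UNIV. \<bar>w i - w' i\<bar>)"
proof -
  obtain i where i: "scal f w x = f i x - w i" using scal_attained[of f w x] by blast
  have "\<bar>w i - w' i\<bar> \<le> (\<Sum>i\<in>UNIV. \<bar>w i - w' i\<bar>)"
    by (rule member_le_sum) auto
  moreover have "f i x - w' i \<le> scal f w' x" by (rule scal_ge)
  ultimately show ?thesis using i by linarith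
qed

lemma scal_lip2: "scal f w' x \<le> scal f w x + (\<Sum>i\<in>UNIV. \<bar>w i - w' i\<bar>)"
  using scal_lip1[of f w' x w] by (simp add: abs_minus_commute)

lemma inf_eq: "s \<in> Sol f w \<Longrightarrow> (INF z. scal f w z) = scal f w s"
  unfolding Sol_def by (intro cInf_eq_minimum) auto

lemma inf_lip1:
  assumes "s \<in> Sol f w" "s' \<in> Sol f w'"
  shows "(INF z. scal f w z) \<le> (INF z. scal f w' z) + (\<Sum>i\<in>UNIV. \<bar>w i - w' i\<bar>)"
proof -
  have "scal f w s \<le> scal f w s'" using assms(1) unfolding Sol_def by auto
  then show ?thesis using inf_eq[OF assms(1)] inf_eq[OF assms(2)] scal_lip1[of f w s' w'] by linarith
qed

lemma Sol_eq: "s \<in> Sol f w \<Longrightarrow> Sol f w = {x. scal f w x \<le> scal f w s}"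
  unfolding Sol_def by (auto intro: order_trans)

lemma lev_closed_convex:
  fixes f :: "'m::finite \<Rightarrow> 'a::real_normed_vector \<Rightarrow> real"
  assumes cont: "\<And>i. continuous_on UNIV (f i)" and cvx: "\<And>i. convex_on UNIV (f i)"
  shows "closed {x. scal f w x \<le> c} \<and> convex {x. scal f w x \<le> c}"
proof -
  have eq: "{x. scal f w x \<le> c} = (\<Inter>i. {x. f i x \<le> c + w i})"
    by (auto simp: scal_le_iff) (smt (verit))+
  have "closed {x. f i x \<le> c + w i}" for i
    by (rule closed_Collect_le) (auto intro: cont continuous_intros)
  moreover have "convex {x. f i x \<le> c + w i}" for i
  proof (unfold convex_def, safe)
    fix x y :: 'a and u v :: real assume "f i x \<le> c + w i" "f i y \<le> c + w i" "0 \<le> u" "0 \<le> v" "u + v = 1"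
    then have "f i (u *\<^sub>R x + v *\<^sub>R y) \<le> u * f i x + v * f i y"
      using cvx[of i] unfolding convex_on_def by auto
    also have "\<dots> \<le> u * (c + w i) + v * (c + w i)"
      using \<open>f i x \<le> _\<close> \<open>f i y \<le> _\<close> \<open>0 \<le> u\<close> \<open>0 \<le> v\<close> by (intro add_mono mult_left_mono) auto
    also have "\<dots> = c + w i" using \<open>u + v = 1\<close> by (simp add: distrib_right[symmetric])
    finally show "f i (u *\<^sub>R x + v *\<^sub>R y) \<le> c + w i" .
  qed
  ultimately show ?thesis unfolding eq by (auto intro!: closed_INT convex_INT)
qed


lemma infdist_approx:
  assumes "A \<noteq> {}" "e > 0"
  shows "\<exists>a\<in>A. dist x a < infdist x A + e"
proof -
  have "Inf ((\<lambda>a. dist x a) ` A) < infdist x A + e"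
    using infdist_notempty[OF assms(1)] assms(2) by simp
  then show ?thesis
    by (subst (asm) cInf_less_iff) (auto simp: assms(1) bdd_below_def intro: exI[of _ 0])
qed

lemma parallelogram:
  fixes x a b :: "'a::real_inner"
  shows "(norm (a - b))\<^sup>2 = 2 * (norm (x - a))\<^sup>2 + 2 * (norm (x - b))\<^sup>2 - 4 * (norm (x - (1/2) *\<^sub>R (a + b)))\<^sup>2"
  unfolding power2_norm_eq_inner
  by (simp add: inner_diff_left inner_diff_right inner_add_left inner_add_right inner_commute algebra_simps)

lemma proj_exists:
  fixes x :: "'a::{real_inner,complete_space}"
  assumes C: "closed C" "convex C" "C \<noteq> {}"
  shows "\<exists>p\<in>C. \<forall>c\<in>C. dist x p \<le> dist x c"
proof -
  define d where "d = infdist x C"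
  have d0: "d \<ge> 0" unfolding d_def by (rule infdist_nonneg)
  have "\<forall>n. \<exists>a. a \<in> C \<and> dist x a < d + 1 / (real n + 1)"
  proof
    fix n
    have "(0::real) < 1 / (real n + 1)" by simp
    from infdist_approx[OF C(3) this, of x]
    show "\<exists>a. a \<in> C \<and> dist x a < d + 1 / (real n + 1)" unfolding d_def by blast
  qed
  then have "\<exists>c. \<forall>n. c n \<in> C \<and> dist x (c n) < d + 1 / (real n + 1)" by (rule choice)
  then obtain c where c: "\<And>n. c n \<in> C" "\<And>n. dist x (c n) < d + 1 / (real n + 1)"
    by blast
  have dle: "d \<le> dist x y" if "y \<in> C" for y unfolding d_def using that by (rule infdist_le)
  have key: "(norm (c m - c n))\<^sup>2 \<le> (8 * d + 4) * e"
    if "1 / (real m + 1) \<le> e" "1 / (real n + 1) \<le> e" "e \<le> 1" for m n e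
  proof -
    have mid: "(1/2) *\<^sub>R (c m + c n) \<in> C"
    proof -
      have "(1/2::real) *\<^sub>R c m + (1/2::real) *\<^sub>R c n \<in> C"
        by (rule convexD[OF C(2) c(1) c(1)]) auto
      then show ?thesis by (simp add: scaleR_add_right)
    qed
    have h1: "norm (x - c m) \<le> d + e" using c(2)[of m] that by (simp add: dist_norm)
    have h2: "norm (x - c n) \<le> d + e" using c(2)[of n] that by (simp add: dist_norm)
    have h3: "d \<le> norm (x - (1/2) *\<^sub>R (c m + c n))" using dle[OF mid] by (simp add: dist_norm)
    have "0 < 1 / (real m + 1)" by simp
    then have e0: "0 \<le> e" using that(1) by linarith
    have "(norm (x - c m))\<^sup>2 \<le> (d + e)\<^sup>2" using h1 by (intro power_mono) auto
    moreover have "(norm (x - c n))\<^sup>2 \<le> (d + e)\<^sup>2" using h2 by (intro power_mono) auto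
    moreover have "d\<^sup>2 \<le> (norm (x - (1/2) *\<^sub>R (c m + c n)))\<^sup>2" using h3 d0 by (intro power_mono) auto
    ultimately have "(norm (c m - c n))\<^sup>2 \<le> 4 * (d + e)\<^sup>2 - 4 * d\<^sup>2"
      using parallelogram[of "c m" "c n" x] by linarith
    also have "\<dots> = 8 * d * e + 4 * e * e" by (simp add: power2_eq_square algebra_simps)
    also have "\<dots> \<le> 8 * d * e + 4 * e" using e0 that(3) by (simp add: mult_left_le)
    finally show ?thesis by (simp add: algebra_simps)
  qed
  have "Cauchy c"
  proof (rule metric_CauchyI)
    fix eps :: real assume eps: "eps > 0"
    define e where "e = min 1 (eps\<^sup>2 / (2 * (8 * d + 4)))"
    have e0: "e > 0" unfolding e_def using eps d0 by auto
    obtain N :: nat where N: "1 / e < real N" using reals_Archimedean2 by blast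
    have small: "1 / (real n + 1) \<le> e" if "n \<ge> N" for n
    proof -
      have "1 / e < real n + 1" using N that by linarith
      then show ?thesis using e0 by (simp add: field_simps)
    qed
    show "\<exists>M. \<forall>m\<ge>M. \<forall>n\<ge>M. dist (c m) (c n) < eps"
    proof (intro exI allI impI)
      fix m n assume "m \<ge> N" "n \<ge> N"
      then have "(norm (c m - c n))\<^sup>2 \<le> (8 * d + 4) * e"
        using key[OF small[OF \<open>m \<ge> N\<close>] small[OF \<open>n \<ge> N\<close>]] by (simp add: e_def)
      also have "\<dots> \<le> (8 * d + 4) * (eps\<^sup>2 / (2 * (8 * d + 4)))"
        using d0 unfolding e_def by (intro mult_left_mono) auto
      also have "\<dots> = eps\<^sup>2 / 2" using d0 by (simp add: field_simps)
      also have "\<dots> < eps\<^sup>2" using eps by simp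
      finally have "(norm (c m - c n))\<^sup>2 < eps\<^sup>2" .
      then have "norm (c m - c n) < eps" by (rule power_less_imp_less_base) (use eps in linarith)
      then show "dist (c m) (c n) < eps" by (simp add: dist_norm)
    qed
  qed
  then obtain p where p: "c \<longlonglongrightarrow> p" using complete_UNIV convergent_eq_Cauchy by blast
  have pC: "p \<in> C" using closed_sequentially[OF C(1)] c(1) p by blast
  have "(\<lambda>n. dist x (c n)) \<longlonglongrightarrow> dist x p" by (intro tendsto_intros p)
  moreover have "(\<lambda>n. d + 1 / (real n + 1)) \<longlonglongrightarrow> d + 0"
  proof (intro tendsto_add tendsto_const)
    show "(\<lambda>n. 1 / (real n + 1)) \<longlonglongrightarrow> (0::real)"
      using LIMSEQ_inverse_real_of_nat by (simp add: inverse_eq_divide add.commute)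
  qed
  ultimately have "dist x p \<le> d + 0"
    using c(2) by (intro LIMSEQ_le[of "\<lambda>n. dist x (c n)" _ "\<lambda>n. d + 1 / (real n + 1)"]) (auto intro: less_imp_le)
  then show ?thesis using pC dle by force
qed

lemma proj_var:
  fixes x :: "'a::real_inner"
  assumes C: "convex C" and pC: "p \<in> C" and min: "\<forall>c\<in>C. dist x p \<le> dist x c" and cC: "c \<in> C"
  shows "inner (x - p) (c - p) \<le> 0"
proof (rule ccontr)
  define a where "a = inner (x - p) (c - p)"
  define b where "b = (norm (c - p))\<^sup>2"
  assume "\<not> inner (x - p) (c - p) \<le> 0"
  then have a0: "a > 0" unfolding a_def by simp
  have b0: "b \<ge> 0" unfolding b_def by simp
  define t where "t = min 1 (a / (b + 1))"
  have t0: "t > 0" "t \<le> 1" unfolding t_def using a0 b0 by auto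
  have "p + t *\<^sub>R (c - p) = (1 - t) *\<^sub>R p + t *\<^sub>R c" by (simp add: algebra_simps)
  moreover have "(1 - t) *\<^sub>R p + t *\<^sub>R c \<in> C" using C pC cC t0 unfolding convex_def by auto
  ultimately have qC: "p + t *\<^sub>R (c - p) \<in> C" by simp
  have "(norm (x - p))\<^sup>2 \<le> (norm (x - (p + t *\<^sub>R (c - p))))\<^sup>2"
    using min qC by (intro power_mono) (auto simp: dist_norm)
  also have "\<dots> = (norm (x - p))\<^sup>2 - 2 * t * a + t * t * b"
    unfolding a_def b_def power2_norm_eq_inner
    by (simp add: inner_diff_left inner_diff_right inner_add_left inner_add_right inner_commute algebra_simps)
  finally have "t * (2 * a) \<le> t * (t * b)" by (simp add: algebra_simps)
  then have "2 * a \<le> t * b" using t0 by (simp add: mult_le_cancel_left_pos)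
  moreover have "t * b \<le> a / (b + 1) * b" using b0 unfolding t_def by (intro mult_right_mono) auto
  moreover have "a / (b + 1) * b < 2 * a"
  proof -
    have "b / (b + 1) < 1" using b0 by simp
    then have "a * (b / (b + 1)) < a * 1" using a0 by (intro mult_strict_left_mono) auto
    then show ?thesis using a0 by simp
  qed
  ultimately show False by linarith
qed

lemma weak_closed:
  fixes y :: "nat \<Rightarrow> 'a::{real_inner,complete_space}"
  assumes C: "closed C" "convex C" and ev: "eventually (\<lambda>l. y l \<in> C) sequentially"
    and w: "weakly_conv y x"
  shows "x \<in> C"
proof -
  have "C \<noteq> {}"
  proof
    assume "C = {}"
    with ev have "eventually (\<lambda>l. False) sequentially" by simp
    then show False by simp
  qed
  then obtain p where pC: "p \<in> C" and min: "\<forall>c\<in>C. dist x p \<le> dist x p \<and> dist x p \<le> dist x c"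
    using proj_exists[OF C] by auto
  define d where "d = x - p"
  have var: "inner d c \<le> inner d p" if "c \<in> C" for c
    using proj_var[OF C(2) pC _ that] min unfolding d_def by (auto simp: inner_diff_right)
  have lim: "(\<lambda>l. inner (y l) d) \<longlonglongrightarrow> inner x d" using w unfolding weakly_conv_def by auto
  have "inner x d \<le> inner p d"
  proof (rule LIMSEQ_le_const2[OF lim])
    obtain N where "\<forall>n\<ge>N. y n \<in> C" using ev unfolding eventually_sequentially by auto
    then show "\<exists>N. \<forall>n\<ge>N. inner (y n) d \<le> inner p d"
      using var by (metis inner_commute)
  qed
  then have "inner d d \<le> 0" unfolding d_def by (simp add: inner_diff_left)
  then have "d = 0" by (metis inner_gt_zero_iff not_le)
  then show ?thesis using pC unfolding d_def by simp
qed


lemma field_le_eps_aux: "(\<And>e::real. 0 < e \<Longrightarrow> x \<le> y + e) \<Longrightarrow> x \<le> y"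
  by (rule field_le_epsilon) auto

theorem mainTheorem4:
  fixes f :: "'m::finite \<Rightarrow> 'a::{real_inner, complete_space} \<Rightarrow> real"
    and ws :: "'m \<Rightarrow> real" and wk :: "nat \<Rightarrow> ('m \<Rightarrow> real)"
  assumes cvx: "\<And>i. convex_on UNIV (f i)"
    and C1: "\<And>i. \<exists>f'. (\<forall>x. (f i has_derivative blinfun_apply (f' x)) (at x)) \<and> continuous_on UNIV f'"
    and nonempty: "\<And>w. Sol f w \<noteq> {}"
    and growth: "uniform_growth f"
    and conv: "wk \<longlonglongrightarrow> ws"
  shows "mosco_conv (\<lambda>k. Sol f (wk k)) (Sol f ws)"
proof -
  have cont: "continuous_on UNIV (f i)" for i
  proof -
    obtain f' where "\<forall>x. (f i has_derivative blinfun_apply (f' x)) (at x)" using C1[of i] by blast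
    then have "\<forall>x\<in>UNIV. isCont (f i) x" using has_derivative_continuous by blast
    then show ?thesis by (rule continuous_at_imp_continuous_on)
  qed
  have cc: "closed (Sol f w) \<and> convex (Sol f w)" for w
  proof -
    obtain s where s: "s \<in> Sol f w" using nonempty[of w] by blast
    show ?thesis unfolding Sol_eq[OF s] by (rule lev_closed_convex[where f=f, OF cont cvx])
  qed
  define \<delta> where "\<delta> k = (\<Sum>i\<in>UNIV. \<bar>wk k i - ws i\<bar>)" for k
  have \<delta>lim: "\<delta> \<longlonglongrightarrow> 0" unfolding \<delta>_def by (rule delta_tendsto[OF conv])
  have \<delta>0: "\<delta> k \<ge> 0" for k unfolding \<delta>_def by (simp add: sum_nonneg)
  have \<delta>sym: "(\<Sum>i\<in>UNIV. \<bar>ws i - wk k i\<bar>) = \<delta> k" for k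
    unfolding \<delta>_def by (simp add: abs_minus_commute)
  define v where "v w = (INF z. scal f w z)" for w
  have vlip: "v w \<le> v w' + (\<Sum>i\<in>UNIV. \<bar>w i - w' i\<bar>)" for w w'
  proof -
    obtain s where s: "s \<in> Sol f w" using nonempty[of w] by blast
    obtain s' where s': "s' \<in> Sol f w'" using nonempty[of w'] by blast
    show ?thesis unfolding v_def by (rule inf_lip1[OF s s'])
  qed
  have part1: "\<forall>x\<in>Sol f ws. \<exists>xs. (\<forall>k. xs k \<in> Sol f (wk k)) \<and> xs \<longlonglongrightarrow> x"
  proof
    fix x assume x: "x \<in> Sol f ws"
    obtain \<psi> :: "real \<Rightarrow> real" where psi: "strict_mono_on {0..} \<psi>" "\<psi> 0 = 0"
      and gr0: "\<forall>wk::nat \<Rightarrow> ('m \<Rightarrow> real). wk \<longlonglongrightarrow> ws \<longrightarrow>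
         (\<forall>x\<in>Sol f ws. \<forall>k. scal f (wk k) x - (INF z. scal f (wk k) z) \<ge> \<psi> (infdist x (Sol f (wk k))))"
      using growth unfolding uniform_growth_def by blast
    define D where "D k = infdist x (Sol f (wk k))" for k
    have D0: "D k \<ge> 0" for k unfolding D_def by (rule infdist_nonneg)
    have G: "\<psi> (D k) \<le> 2 * \<delta> k" for k
    proof -
      have "\<psi> (D k) \<le> scal f (wk k) x - v (wk k)"
        using gr0 conv x unfolding D_def v_def by blast
      moreover have "scal f (wk k) x \<le> scal f ws x + \<delta> k"
        using scal_lip1[of f "wk k" x ws] unfolding \<delta>_def by simp
      moreover have "scal f ws x = v ws" unfolding v_def using inf_eq[OF x] by simp
      moreover have "v ws \<le> v (wk k) + \<delta> k" using vlip[of ws "wk k"] \<delta>sym[of k] by simp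
      ultimately show ?thesis by linarith
    qed
    have Dlim: "D \<longlonglongrightarrow> 0"
    proof (rule LIMSEQ_I)
      fix r :: real assume r: "0 < r"
      have "\<psi> 0 < \<psi> r" using psi(1) r by (auto simp: strict_mono_on_def)
      then have pr: "\<psi> r > 0" using psi(2) by simp
      obtain no where no: "\<forall>n\<ge>no. norm (\<delta> n - 0) < \<psi> r / 2"
        using LIMSEQ_D[OF \<delta>lim, of "\<psi> r / 2"] pr by auto
      show "\<exists>no. \<forall>n\<ge>no. norm (D n - 0) < r"
      proof (intro exI allI impI)
        fix n assume "n \<ge> no"
        then have "\<psi> (D n) < \<psi> r" using no G[of n] by auto
        moreover have "r \<le> D n \<Longrightarrow> \<psi> r \<le> \<psi> (D n)"
          using strict_mono_on_leD[OF psi(1), of r "D n"] r by auto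
        ultimately have "D n < r" by linarith
        then show "norm (D n - 0) < r" using D0[of n] by simp
      qed
    qed
    have "\<forall>k. \<exists>a. a \<in> Sol f (wk k) \<and> dist x a < D k + 1 / (real k + 1)"
    proof
      fix k
      have "(0::real) < 1 / (real k + 1)" by simp
      from infdist_approx[OF nonempty[of "wk k"] this, where x=x]
      show "\<exists>a. a \<in> Sol f (wk k) \<and> dist x a < D k + 1 / (real k + 1)" unfolding D_def by blast
    qed
    then have "\<exists>xs. \<forall>k. xs k \<in> Sol f (wk k) \<and> dist x (xs k) < D k + 1 / (real k + 1)" by (rule choice)
    then obtain xs where xs: "\<And>k. xs k \<in> Sol f (wk k)" "\<And>k. dist x (xs k) < D k + 1 / (real k + 1)"
      by blast
    have lim1: "(\<lambda>k. D k + 1 / (real k + 1)) \<longlonglongrightarrow> 0 + 0"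
    proof (intro tendsto_add Dlim)
      show "(\<lambda>n. 1 / (real n + 1)) \<longlonglongrightarrow> (0::real)"
        using LIMSEQ_inverse_real_of_nat by (simp add: inverse_eq_divide add.commute)
    qed
    have "(\<lambda>k. dist (xs k) x) \<longlonglongrightarrow> 0"
    proof (rule tendsto_sandwich[of "\<lambda>k. 0" _ _ "\<lambda>k. D k + 1 / (real k + 1)"])
      show "\<forall>\<^sub>F n in sequentially. 0 \<le> dist (xs n) x" by simp
      show "\<forall>\<^sub>F n in sequentially. dist (xs n) x \<le> D n + 1 / (real n + 1)"
        using xs(2) by (simp add: dist_commute less_imp_le)
      show "(\<lambda>k. 0::real) \<longlonglongrightarrow> 0" by simp
      show "(\<lambda>k. D k + 1 / (real k + 1)) \<longlonglongrightarrow> 0" using lim1 by simp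
    qed
    then have "xs \<longlonglongrightarrow> x" using tendsto_dist_iff by blast
    then show "\<exists>xs. (\<forall>k. xs k \<in> Sol f (wk k)) \<and> xs \<longlonglongrightarrow> x" using xs(1) by blast
  qed
  have part2: "x \<in> Sol f ws"
    if r: "strict_mono r" and ys: "\<forall>l. ys l \<in> Sol f (wk (r l))" and wc: "weakly_conv ys x" for r ys x
  proof -
    have \<delta>r: "(\<delta> \<circ> r) \<longlonglongrightarrow> 0" by (rule LIMSEQ_subseq_LIMSEQ[OF \<delta>lim r])
    obtain s where s: "s \<in> Sol f ws" using nonempty[of ws] by blast
    have vs: "v ws = scal f ws s" unfolding v_def by (rule inf_eq[OF s])
    have main: "scal f ws x \<le> scal f ws s"
    proof (rule field_le_eps_aux)
      fix e :: real assume e: "0 < e"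
      define L where "L = {u. scal f ws u \<le> scal f ws s + e}"
      have Lcc: "closed L" "convex L" unfolding L_def using lev_closed_convex[where f=f, OF cont cvx] by auto
      have "eventually (\<lambda>l. (\<delta> \<circ> r) l < e / 2) sequentially"
        using order_tendstoD(2)[OF \<delta>r, of "e/2"] e by simp
      then have "eventually (\<lambda>l. ys l \<in> L) sequentially"
      proof (rule eventually_mono)
        fix l assume small: "(\<delta> \<circ> r) l < e / 2"
        have "scal f ws (ys l) \<le> scal f (wk (r l)) (ys l) + \<delta> (r l)"
          using scal_lip2[of f ws "ys l" "wk (r l)"] unfolding \<delta>_def by simp
        moreover have "scal f (wk (r l)) (ys l) = v (wk (r l))"
          unfolding v_def using inf_eq[of "ys l" f "wk (r l)"] ys by simp
        moreover have "v (wk (r l)) \<le> v ws + \<delta> (r l)"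
          using vlip[of "wk (r l)" ws] unfolding \<delta>_def by simp
        ultimately show "ys l \<in> L" unfolding L_def using vs small by simp
      qed
      then have "x \<in> L" by (rule weak_closed[OF Lcc _ wc])
      then show "scal f ws x \<le> scal f ws s + e" unfolding L_def by simp
    qed
    show ?thesis using main s unfolding Sol_def by (auto intro: order_trans)
  qed
  show ?thesis
    unfolding mosco_conv_def
    using nonempty cc part1 part2 by blast
qed

end
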